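(* Let $L$ be a $\kappa$-frame and $a\in L$. Then $\mathfrak{D}_L\vee\nabla_a=\partial_{(\downarrow a)^{**}}$ in $\mathbb{C}L$.
   Context: $\kappa$ is a fixed regular cardinal; a $\kappa$-frame is a bounded distributive lattice having joins of all subsets of cardinality $<\kappa$ and satisfying the frame distributive law for such joins. A $\kappa$-ideal is a downset in which every subset of cardinality $<\kappa$ has an upper bound; $\mathfrak{H}_\kappa L$ is the frame of $\kappa$-ideals under inclusion, $\downarrow a=\{x\mid x\le a\}$, and $J^*$ denotes the pseudocomplement in $\mathfrak{H}_\kappa L$ (the largest $\kappa$-ideal $K$ with $K\cap J=\{0\}$), so $(\downarrow a)^{**}=((\downarrow a)^* )^*$. A congruence is an equivalence relation that is a sub-$\kappa$-frame of $L\times L$; $\mathbb{C}L$ is the frame of congruences under inclusion. $\nabla_a=\{(x,y)\mid x\vee a=y\vee a\}$; $\mathfrak{D}_L=\{(b,c)\mid\forall x\in L:\ b\wedge x=0\iff c\wedge x=0\}$; for a $\kappa$-ideal $I$, $\partial_I=\{(b,c)\mid\forall x\in L:\ b\wedge x\in I\iff c\wedge x\in I\}$. *)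

theory Defs
  imports Main
begin

text \<open>kappa is represented by a cardinal order relation (Card_order), assumed
regular and infinite.  The frame L is the whole carrier of a type 'a which
is a bounded distributive lattice.\<close>

definition small :: "'k rel \<Rightarrow> 'a set \<Rightarrow> bool" where
  "small \<kappa> A \<longleftrightarrow> (card_of A, \<kappa>) \<in> ordLess"

definition is_lub :: "'a::order set \<Rightarrow> 'a \<Rightarrow> bool" where
  "is_lub A s \<longleftrightarrow> (\<forall>x\<in>A. x \<le> s) \<and> (\<forall>u. (\<forall>x\<in>A. x \<le> u) \<longrightarrow> s \<le> u)"

definition lub :: "'a::order set \<Rightarrow> 'a" where
  "lub A = (THE s. is_lub A s)"

definition kframe :: "'k rel \<Rightarrow> ('a::{bounded_lattice,distrib_lattice}) itself \<Rightarrow> bool" where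
  "kframe \<kappa> _ \<longleftrightarrow> (\<forall>A::'a set. small \<kappa> A \<longrightarrow>
      (\<exists>s. is_lub A s) \<and> (\<forall>a. inf a (lub A) = lub ((\<lambda>x. inf a x) ` A)))"

definition kideal :: "'k rel \<Rightarrow> 'a::{bounded_lattice,distrib_lattice} set \<Rightarrow> bool" where
  "kideal \<kappa> I \<longleftrightarrow> (\<forall>x y. y \<in> I \<and> x \<le> y \<longrightarrow> x \<in> I) \<and>
     (\<forall>A. A \<subseteq> I \<and> small \<kappa> A \<longrightarrow> (\<exists>u\<in>I. \<forall>x\<in>A. x \<le> u))"

definition downset :: "'a::order \<Rightarrow> 'a set" where
  "downset a = {x. x \<le> a}"

text \<open>Pseudocomplement in the frame of kappa-ideals: the largest kappa-ideal K
with K \<inter> J = {0}.\<close>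
definition ipc :: "'k rel \<Rightarrow> 'a::{bounded_lattice,distrib_lattice} set \<Rightarrow> 'a set" where
  "ipc \<kappa> J = (GREATEST K. kideal \<kappa> K \<and> K \<inter> J = {bot})"

definition congruence :: "'k rel \<Rightarrow> ('a::{bounded_lattice,distrib_lattice} \<times> 'a) set \<Rightarrow> bool" where
  "congruence \<kappa> \<theta> \<longleftrightarrow> equiv UNIV \<theta> \<and>
     (top, top) \<in> \<theta> \<and>
     (\<forall>a b c d. (a, b) \<in> \<theta> \<and> (c, d) \<in> \<theta> \<longrightarrow> (inf a c, inf b d) \<in> \<theta>) \<and>
     (\<forall>S. S \<subseteq> \<theta> \<and> small \<kappa> S \<longrightarrow> (lub (fst ` S), lub (snd ` S)) \<in> \<theta>)"

definition cjoin :: "'k rel \<Rightarrow> ('a::{bounded_lattice,distrib_lattice} \<times> 'a) set \<Rightarrow> ('a \<times> 'a) set \<Rightarrow> ('a \<times> 'a) set" where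
  "cjoin \<kappa> \<theta> \<psi> = \<Inter>{C. congruence \<kappa> C \<and> \<theta> \<union> \<psi> \<subseteq> C}"

definition nablaC :: "'a::lattice \<Rightarrow> ('a \<times> 'a) set" where
  "nablaC a = {(x, y). sup x a = sup y a}"

definition DC :: "('a::bounded_lattice \<times> 'a) set" where
  "DC = {(b, c). \<forall>x. inf b x = bot \<longleftrightarrow> inf c x = bot}"

definition partialC :: "'a::lattice set \<Rightarrow> ('a \<times> 'a) set" where
  "partialC I = {(b, c). \<forall>x. inf b x \<in> I \<longleftrightarrow> inf c x \<in> I}"

end

theory Submission
  imports Defs
begin

lemma small_image: "small \<kappa> A \<Longrightarrow> small \<kappa> (f ` A)"
  unfolding small_def using card_of_image ordLeq_ordLess_trans by blast

lemma infbot_mono: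
  fixes x y w :: "'a::bounded_lattice"
  assumes "x \<le> y" "inf y w = bot"
  shows "inf x w = bot"
proof -
  have "inf x w \<le> inf y w" using assms(1) by (intro inf_mono) auto
  thus ?thesis using assms(2) by (simp add: bot_unique)
qed

lemma lub_is:
  fixes A :: "'a::{bounded_lattice,distrib_lattice} set"
  assumes "kframe \<kappa> TYPE('a)" "small \<kappa> A"
  shows "is_lub A (lub A)"
proof -
  obtain s where s: "is_lub A s" using assms unfolding kframe_def by blast
  have "lub A = s" unfolding lub_def
    by (rule the_equality[where P="is_lub A", OF s]) (meson s antisym is_lub_def)
  thus ?thesis using s by simp
qed

lemma lub_inf_bot:
  fixes A :: "'a::{bounded_lattice,distrib_lattice} set"
  assumes k: "kframe \<kappa> TYPE('a)" and sm: "small \<kappa> A"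
  shows "inf (lub A) w = bot \<longleftrightarrow> (\<forall>y\<in>A. inf y w = bot)"
proof
  assume h: "inf (lub A) w = bot"
  show "\<forall>y\<in>A. inf y w = bot"
  proof
    fix y assume "y \<in> A"
    hence "y \<le> lub A" using lub_is[OF k sm] unfolding is_lub_def by blast
    thus "inf y w = bot" using h by (rule infbot_mono)
  qed
next
  assume h: "\<forall>y\<in>A. inf y w = bot"
  have eq: "inf w (lub A) = lub ((\<lambda>x. inf w x) ` A)" using k sm unfolding kframe_def by blast
  have "is_lub ((\<lambda>x. inf w x) ` A) (lub ((\<lambda>x. inf w x) ` A))"
    by (rule lub_is[OF k small_image[OF sm]])
  moreover have "\<forall>x\<in>(\<lambda>x. inf w x) ` A. x \<le> bot" using h by (auto simp: inf_commute)
  ultimately have "lub ((\<lambda>x. inf w x) ` A) \<le> bot" unfolding is_lub_def by blast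
  hence "inf w (lub A) = bot" using eq by (simp add: bot_unique)
  thus "inf (lub A) w = bot" by (simp add: inf_commute)
qed

lemma ipc1:
  fixes a :: "'a::{bounded_lattice,distrib_lattice}"
  assumes k: "kframe \<kappa> TYPE('a)"
  shows "ipc \<kappa> (downset a) = {x. inf x a = bot}"
  unfolding ipc_def
proof (rule Greatest_equality)
  have "kideal \<kappa> {x. inf x a = bot}"
    unfolding kideal_def
  proof (intro conjI allI impI)
    fix x y assume "y \<in> {x. inf x a = bot} \<and> x \<le> y"
    thus "x \<in> {x. inf x a = bot}" using infbot_mono by blast
  next
    fix A assume h: "A \<subseteq> {x. inf x a = bot} \<and> small \<kappa> A"
    hence "inf (lub A) a = bot" using lub_inf_bot[OF k] by blast
    moreover have "\<forall>x\<in>A. x \<le> lub A" using lub_is[OF k] h unfolding is_lub_def by blast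
    ultimately show "\<exists>u\<in>{x. inf x a = bot}. \<forall>x\<in>A. x \<le> u" by blast
  qed
  moreover have "{x. inf x a = bot} \<inter> downset a = {bot}"
    unfolding downset_def by (auto simp: inf_absorb1)
  ultimately show "kideal \<kappa> {x. inf x a = bot} \<and> {x. inf x a = bot} \<inter> downset a = {bot}" by blast
next
  fix K assume h: "kideal \<kappa> K \<and> K \<inter> downset a = {bot}"
  show "K \<subseteq> {x. inf x a = bot}"
  proof
    fix y assume y: "y \<in> K"
    hence "inf y a \<in> K" using h unfolding kideal_def by (meson inf_le1)
    moreover have "inf y a \<in> downset a" unfolding downset_def by simp
    ultimately show "y \<in> {x. inf x a = bot}" using h by blast
  qed
qed

lemma ipc2:
  fixes a :: "'a::{bounded_lattice,distrib_lattice}"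
  assumes k: "kframe \<kappa> TYPE('a)"
  shows "ipc \<kappa> {x. inf x a = bot} = {y. \<forall>x. inf x a = bot \<longrightarrow> inf y x = bot}"
  unfolding ipc_def
proof (rule Greatest_equality)
  let ?I = "{y. \<forall>x. inf x a = bot \<longrightarrow> inf y x = bot}"
  have "kideal \<kappa> ?I"
    unfolding kideal_def
  proof (intro conjI allI impI)
    fix x y assume "y \<in> ?I \<and> x \<le> y"
    thus "x \<in> ?I" using infbot_mono by blast
  next
    fix A assume h: "A \<subseteq> ?I \<and> small \<kappa> A"
    hence "lub A \<in> ?I" using lub_inf_bot[OF k] by blast
    moreover have "\<forall>x\<in>A. x \<le> lub A" using lub_is[OF k] h unfolding is_lub_def by blast
    ultimately show "\<exists>u\<in>?I. \<forall>x\<in>A. x \<le> u" by blast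
  qed
  moreover have "?I \<inter> {x. inf x a = bot} = {bot}"
    by auto
  ultimately show "kideal \<kappa> ?I \<and> ?I \<inter> {x. inf x a = bot} = {bot}" by blast
next
  fix K assume h: "kideal \<kappa> K \<and> K \<inter> {x. inf x a = bot} = {bot}"
  show "K \<subseteq> {y. \<forall>x. inf x a = bot \<longrightarrow> inf y x = bot}"
  proof (intro subsetI CollectI allI impI)
    fix y x assume y: "y \<in> K" and x: "inf x a = bot"
    hence "inf y x \<in> K" using h unfolding kideal_def by (meson inf_le1)
    moreover have "inf (inf y x) a = bot"
      by (simp add: inf_assoc x)
    ultimately show "inf y x = bot" using h by blast
  qed
qed

lemma nab:
  fixes a :: "'a::{bounded_lattice,distrib_lattice}"
  assumes "sup b a = sup c a" "inf z a = bot" "inf (inf b x) z = bot"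
  shows "inf (inf c x) z = bot"
proof -
  have "inf (inf c x) z \<le> inf (inf (sup c a) x) z" by (intro inf_mono) auto
  also have "\<dots> = inf (inf (sup b a) x) z" using assms by simp
  also have "\<dots> = sup (inf (inf b x) z) (inf (inf a x) z)" by (simp add: inf_sup_distrib2)
  also have "inf (inf a x) z = bot"
  proof -
    have "inf (inf a x) z \<le> inf z a" by (auto intro: le_infI1 le_infI2)
    thus ?thesis using assms(2) by (simp add: bot_unique)
  qed
  finally have "inf (inf c x) z \<le> sup (inf (inf b x) z) bot" .
  thus ?thesis using assms(3) by (simp add: bot_unique)
qed

theorem mainTheorem18:
  fixes \<kappa> :: "'k rel" and a :: "'a::{bounded_lattice,distrib_lattice}"
  assumes "Card_order \<kappa>" and "Cinfinite \<kappa>" and "regularCard \<kappa>"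
    and "kframe \<kappa> TYPE('a)"
  shows "cjoin \<kappa> DC (nablaC a) = partialC (ipc \<kappa> (ipc \<kappa> (downset a)))"
proof -
  note k = assms(4)
  define I where "I = {y. \<forall>x. inf x a = bot \<longrightarrow> inf y x = bot}"
  have II: "ipc \<kappa> (ipc \<kappa> (downset a)) = I" unfolding I_def using ipc1[OF k] ipc2[OF k] by simp
  have memI: "p \<in> I \<longleftrightarrow> (\<forall>z. inf z a = bot \<longrightarrow> inf p z = bot)" for p unfolding I_def by simp
  have key: "inf (lub A) x \<in> I \<longleftrightarrow> (\<forall>y\<in>A. inf y x \<in> I)" if sm: "small \<kappa> A" for A x
  proof -
    have "inf (lub A) x \<in> I \<longleftrightarrow> (\<forall>z. inf z a = bot \<longrightarrow> inf (lub A) (inf x z) = bot)"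
      by (simp add: memI inf_assoc)
    also have "\<dots> \<longleftrightarrow> (\<forall>z. inf z a = bot \<longrightarrow> (\<forall>y\<in>A. inf y (inf x z) = bot))"
      using lub_inf_bot[OF k sm] by simp
    also have "\<dots> \<longleftrightarrow> (\<forall>y\<in>A. \<forall>z. inf z a = bot \<longrightarrow> inf y (inf x z) = bot)"
      by blast
    also have "\<dots> \<longleftrightarrow> (\<forall>y\<in>A. inf y x \<in> I)"
      unfolding memI by (simp only: inf_assoc)
    finally show ?thesis .
  qed
  have cong: "congruence \<kappa> (partialC I)"
    unfolding congruence_def
  proof (intro conjI allI impI)
    show "equiv UNIV (partialC I)"
      unfolding equiv_def refl_on_def sym_def trans_def partialC_def by auto
    show "(top, top) \<in> partialC I" unfolding partialC_def by auto
  next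
    fix p q r s assume h: "(p, q) \<in> partialC I \<and> (r, s) \<in> partialC I"
    show "(inf p r, inf q s) \<in> partialC I" unfolding partialC_def
    proof (intro CollectI case_prodI allI)
      fix x
      have "inf (inf p r) x \<in> I \<longleftrightarrow> inf p (inf r x) \<in> I" by (simp add: inf_assoc)
      also have "\<dots> \<longleftrightarrow> inf q (inf r x) \<in> I" using h unfolding partialC_def by blast
      also have "inf q (inf r x) = inf r (inf q x)" by (simp add: inf_left_commute)
      also have "inf r (inf q x) \<in> I \<longleftrightarrow> inf s (inf q x) \<in> I" using h unfolding partialC_def by blast
      also have "inf s (inf q x) = inf (inf q s) x" by (simp add: inf_assoc inf_left_commute)
      finally show "inf (inf p r) x \<in> I \<longleftrightarrow> inf (inf q s) x \<in> I" .
    qed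
  next
    fix S assume h: "S \<subseteq> partialC I \<and> small \<kappa> S"
    have s1: "small \<kappa> (fst ` S)" and s2: "small \<kappa> (snd ` S)" using h small_image by blast+
    show "(lub (fst ` S), lub (snd ` S)) \<in> partialC I" unfolding partialC_def
    proof (intro CollectI case_prodI allI)
      fix x
      have hS: "inf p x \<in> I \<longleftrightarrow> inf q x \<in> I" if "(p, q) \<in> S" for p q
        using h that unfolding partialC_def by blast
      have "(\<forall>y\<in>fst ` S. inf y x \<in> I) \<longleftrightarrow> (\<forall>y\<in>snd ` S. inf y x \<in> I)"
      proof
        assume L: "\<forall>y\<in>fst ` S. inf y x \<in> I"
        show "\<forall>y\<in>snd ` S. inf y x \<in> I"
        proof
          fix y assume "y \<in> snd ` S"
          then obtain p where "(p, y) \<in> S" by force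
          thus "inf y x \<in> I" using L hS by force
        qed
      next
        assume L: "\<forall>y\<in>snd ` S. inf y x \<in> I"
        show "\<forall>y\<in>fst ` S. inf y x \<in> I"
        proof
          fix y assume "y \<in> fst ` S"
          then obtain q where "(y, q) \<in> S" by force
          thus "inf y x \<in> I" using L hS by force
        qed
      qed
      thus "inf (lub (fst ` S)) x \<in> I \<longleftrightarrow> inf (lub (snd ` S)) x \<in> I"
        using key[OF s1] key[OF s2] by simp
    qed
  qed
  have subD: "DC \<subseteq> partialC I"
  proof
    fix p :: "'a \<times> 'a" assume "p \<in> DC"
    then obtain b c :: 'a where p: "p = (b, c)" and e: "\<And>x. inf b x = bot \<longleftrightarrow> inf c x = bot"
      unfolding DC_def by auto
    have "inf b x \<in> I \<longleftrightarrow> inf c x \<in> I" for x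
    proof -
      have "inf b x \<in> I \<longleftrightarrow> (\<forall>z. inf z a = bot \<longrightarrow> inf b (inf x z) = bot)"
        unfolding memI by (simp only: inf_assoc)
      also have "\<dots> \<longleftrightarrow> (\<forall>z. inf z a = bot \<longrightarrow> inf c (inf x z) = bot)"
        using e by blast
      also have "\<dots> \<longleftrightarrow> inf c x \<in> I"
        unfolding memI by (simp only: inf_assoc)
      finally show ?thesis .
    qed
    thus "p \<in> partialC I" unfolding partialC_def p by simp
  qed
  have subN: "nablaC a \<subseteq> partialC I"
  proof
    fix p :: "'a \<times> 'a" assume "p \<in> nablaC a"
    then obtain b c :: 'a where p: "p = (b, c)" and e: "sup b a = sup c a"
      unfolding nablaC_def by auto
    have "inf b x \<in> I \<longleftrightarrow> inf c x \<in> I" for x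
      unfolding memI using nab[OF e] nab[OF e[symmetric]] by blast
    thus "p \<in> partialC I" unfolding partialC_def p by simp
  qed
  have low: "partialC I \<subseteq> C" if C: "congruence \<kappa> C" "DC \<union> nablaC a \<subseteq> C" for C
  proof
    fix bc assume "bc \<in> partialC I"
    then obtain b c where bc: "bc = (b, c)" and hb: "\<forall>x. inf b x \<in> I \<longleftrightarrow> inf c x \<in> I"
      unfolding partialC_def by auto
    have tr: "trans C" using C unfolding congruence_def equiv_def by blast
    have aux: "inf p x \<in> I \<longleftrightarrow> inf p x = bot" if ax: "inf a x = bot" for p x
    proof
      assume "inf p x \<in> I"
      moreover have "inf x a = bot" using ax by (simp add: inf_commute)
      ultimately have "inf (inf p x) x = bot" unfolding memI by blast
      thus "inf p x = bot" by (simp add: inf_assoc)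
    next
      assume "inf p x = bot"
      thus "inf p x \<in> I" unfolding memI by simp
    qed
    have "(b, sup b a) \<in> nablaC a" unfolding nablaC_def by (simp add: sup_assoc)
    hence 1: "(b, sup b a) \<in> C" using C by blast
    have 2: "(sup b a, sup c a) \<in> C"
    proof -
      have "inf (sup b a) x = bot \<longleftrightarrow> inf (sup c a) x = bot" for x
      proof (cases "inf a x = bot")
        case True
        have "inf b x = bot \<longleftrightarrow> inf c x = bot" using hb aux[OF True] by blast
        thus ?thesis by (simp add: inf_sup_distrib2)
      next
        case False
        thus ?thesis by (simp add: inf_sup_distrib2)
      qed
      hence "(sup b a, sup c a) \<in> DC" unfolding DC_def by simp
      thus ?thesis using C by blast
    qed
    have "(sup c a, c) \<in> nablaC a" unfolding nablaC_def by (simp add: sup_assoc)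
    hence 3: "(sup c a, c) \<in> C" using C by blast
    show "bc \<in> C" using 1 2 3 tr bc by (meson transD)
  qed
  have "cjoin \<kappa> DC (nablaC a) = partialC I"
    unfolding cjoin_def
  proof (rule antisym)
    show "\<Inter>{C. congruence \<kappa> C \<and> DC \<union> nablaC a \<subseteq> C} \<subseteq> partialC I"
      using cong subD subN by (intro Inter_lower) auto
    show "partialC I \<subseteq> \<Inter>{C. congruence \<kappa> C \<and> DC \<union> nablaC a \<subseteq> C}"
      using low by (intro Inter_greatest) auto
  qed
  thus ?thesis using II by simp
qed

end
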